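(* Assume the following setting. For each $n$, $X\in\mathbb{R}^{n\times e}$ is deterministic with rows $x_i$; $\Gamma\in\mathbb{R}^{e\times p}$, $\sigma^2>0$, $\sigma_z^2>0$, $e,p$ are fixed; $\lambda\ge0$ and $\beta_0\in\mathbb{R}^e$ depend on $n$. Let $y=X\beta_0+\epsilon$, $Z=X\Gamma+E$, with entries of $E$ i.i.d. $N(0,\sigma_z^2)$, entries of $\epsilon$ i.i.d. $N(0,\sigma^2)$, $E,\epsilon$ independent. Assume as $n\to\infty$: $\lambda/n\to\kappa\ge0$; $\sqrt n\beta_0\to\alpha_0$; $\frac1nX^TX\to\Sigma$ positive definite; $\frac1n\mathbf{1}^TX\to\Theta\in\mathbb{R}^{1\times e}$; $\max_i\|x_i\|=o(n^{1/3})$. Let $\tilde Z=[\mathbf{1},Z]\in\mathbb{R}^{n\times(p+1)}$, and let $\tilde Z_{(i)}$, $X_{(i)}$ be $\tilde Z$, $X$ with their $i$-th rows removed. Then as $n\to\infty$, $\|\tilde Z^TX\|=O_P(n)$ and $$\max_{1\le i\le n}\|\tilde Z^TX-\tilde Z_{(i)}^TX_{(i)}\|=o_P(n).$$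
   Context: $\|M\|$ denotes the $\ell^2$ operator norm of a matrix $M$; $O_P,o_P$ refer to $n\to\infty$. *)

theory Defs
  imports "HOL-Probability.Probability"
begin

text \<open>Matrices of varying size are functions nat => nat => real with explicit bounds.\<close>

definition vnorm :: "nat \<Rightarrow> (nat \<Rightarrow> real) \<Rightarrow> real" where
  "vnorm k v = sqrt (\<Sum>j<k. (v j)^2)"

definition mat_opnorm :: "nat \<Rightarrow> nat \<Rightarrow> (nat \<Rightarrow> nat \<Rightarrow> real) \<Rightarrow> real" where
  "mat_opnorm m k A = Sup ((\<lambda>v. vnorm m (\<lambda>i. \<Sum>j<k. A i j * v j)) ` {v. vnorm k v \<le> 1})"

definition Zmat :: "nat \<Rightarrow> (nat \<Rightarrow> nat \<Rightarrow> real) \<Rightarrow> (nat \<Rightarrow> nat \<Rightarrow> real) \<Rightarrow> (nat \<Rightarrow> nat \<Rightarrow> real)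
    \<Rightarrow> nat \<Rightarrow> nat \<Rightarrow> real" where
  "Zmat e X Gam E i l = (\<Sum>k<e. X i k * Gam k l) + E i l"

definition Ztilde :: "(nat \<Rightarrow> nat \<Rightarrow> real) \<Rightarrow> nat \<Rightarrow> nat \<Rightarrow> real" where
  "Ztilde Z i j = (if j = 0 then 1 else Z i (j - 1))"

text \<open>A^T B over the rows in the index set R (R = {..<n} gives A^T B; R = {..<n}-{i} gives A_(i)^T B_(i)).\<close>
definition crossprod :: "nat set \<Rightarrow> (nat \<Rightarrow> nat \<Rightarrow> real) \<Rightarrow> (nat \<Rightarrow> nat \<Rightarrow> real) \<Rightarrow> nat \<Rightarrow> nat \<Rightarrow> real" where
  "crossprod R A B a b = (\<Sum>i\<in>R. A i a * B i b)"

definition posdef :: "nat \<Rightarrow> (nat \<Rightarrow> nat \<Rightarrow> real) \<Rightarrow> bool" where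
  "posdef e S \<longleftrightarrow> (\<forall>a<e. \<forall>b<e. S a b = S b a) \<and>
     (\<forall>v. (\<exists>k<e. v k \<noteq> 0) \<longrightarrow> (\<Sum>a<e. \<Sum>b<e. v a * S a b * v b) > 0)"

end

theory Submission
  imports Defs "HOL-Real_Asymp.Real_Asymp"
begin


definition Sabs :: "nat \<Rightarrow> nat \<Rightarrow> (nat \<Rightarrow> nat \<Rightarrow> real) \<Rightarrow> real" where
  "Sabs m k A = (\<Sum>i<m. \<Sum>j<k. \<bar>A i j\<bar>)"

lemma vnorm_L2: "vnorm k v = L2_set v {..<k}"
  by (simp add: vnorm_def L2_set_def)

lemma vnorm_comp_le:
  assumes "vnorm k v \<le> 1" "j < k" shows "\<bar>v j\<bar> \<le> 1"
proof -
  have "\<bar>v j\<bar> \<le> L2_set (\<lambda>i. \<bar>v i\<bar>) {..<k}"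
    using assms(2) by (intro member_le_L2_set) auto
  also have "\<dots> = vnorm k v" unfolding vnorm_L2 L2_set_def by simp
  finally show ?thesis using assms(1) by simp
qed

lemma Av_le:
  assumes "vnorm k v \<le> 1"
  shows "vnorm m (\<lambda>i. \<Sum>j<k. A i j * v j) \<le> Sabs m k A"
proof -
  have "vnorm m (\<lambda>i. \<Sum>j<k. A i j * v j) \<le> (\<Sum>i<m. \<bar>\<Sum>j<k. A i j * v j\<bar>)"
    unfolding vnorm_L2 by (rule L2_set_le_sum_abs)
  also have "\<dots> \<le> (\<Sum>i<m. \<Sum>j<k. \<bar>A i j\<bar>)"
  proof (rule sum_mono)
    fix i assume "i \<in> {..<m}"
    have "\<bar>\<Sum>j<k. A i j * v j\<bar> \<le> (\<Sum>j<k. \<bar>A i j * v j\<bar>)" by (rule sum_abs)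
    also have "\<dots> \<le> (\<Sum>j<k. \<bar>A i j\<bar>)"
    proof (rule sum_mono)
      fix j assume "j \<in> {..<k}"
      then have "\<bar>v j\<bar> \<le> 1" using vnorm_comp_le[OF assms] by auto
      then show "\<bar>A i j * v j\<bar> \<le> \<bar>A i j\<bar>"
        by (simp add: abs_mult mult_left_le)
    qed
    finally show "\<bar>\<Sum>j<k. A i j * v j\<bar> \<le> (\<Sum>j<k. \<bar>A i j\<bar>)" .
  qed
  finally show ?thesis unfolding Sabs_def .
qed

lemma opnorm_bdd: "bdd_above ((\<lambda>v. vnorm m (\<lambda>i. \<Sum>j<k. A i j * v j)) ` {v. vnorm k v \<le> 1})"
  using Av_le by (intro bdd_aboveI[where M="Sabs m k A"]) blast

lemma zero_in: "(\<lambda>_. 0) \<in> {v. vnorm k v \<le> (1::real)}"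
  by (simp add: vnorm_def)

lemma opnorm_le_S: "mat_opnorm m k A \<le> Sabs m k A"
  unfolding mat_opnorm_def using Av_le zero_in
  by (intro cSup_least) blast+

lemma vnorm_le_opnorm: "vnorm k v \<le> 1 \<Longrightarrow> vnorm m (\<lambda>i. \<Sum>j<k. A i j * v j) \<le> mat_opnorm m k A"
  unfolding mat_opnorm_def by (intro cSup_upper opnorm_bdd) auto

lemma opnorm_nonneg: "0 \<le> mat_opnorm m k A"
  using vnorm_le_opnorm[OF zero_in[simplified], of m A]
  by (smt (verit) vnorm_L2 L2_set_nonneg)

lemma opnorm_lip: "mat_opnorm m k A \<le> mat_opnorm m k B + Sabs m k (\<lambda>i j. A i j - B i j)"
  unfolding mat_opnorm_def[of m k A]
proof (intro cSup_least)
  show "(\<lambda>v. vnorm m (\<lambda>i. \<Sum>j<k. A i j * v j)) ` {v. vnorm k v \<le> 1} \<noteq> {}" using zero_in by blast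
  fix x assume "x \<in> (\<lambda>v. vnorm m (\<lambda>i. \<Sum>j<k. A i j * v j)) ` {v. vnorm k v \<le> 1}"
  then obtain v where v: "vnorm k v \<le> 1" and x: "x = vnorm m (\<lambda>i. \<Sum>j<k. A i j * v j)" by auto
  have eq: "(\<lambda>i. \<Sum>j<k. A i j * v j) = (\<lambda>i. (\<Sum>j<k. B i j * v j) + (\<Sum>j<k. (A i j - B i j) * v j))"
    by (auto simp: sum.distrib[symmetric] algebra_simps)
  have "x \<le> vnorm m (\<lambda>i. \<Sum>j<k. B i j * v j) + vnorm m (\<lambda>i. \<Sum>j<k. (A i j - B i j) * v j)"
    unfolding x eq vnorm_L2 by (rule L2_set_triangle_ineq)
  also have "\<dots> \<le> mat_opnorm m k B + Sabs m k (\<lambda>i j. A i j - B i j)"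
    by (intro add_mono vnorm_le_opnorm Av_le v)
  finally show "x \<le> mat_opnorm m k B + Sabs m k (\<lambda>i j. A i j - B i j)" .
qed

lemma opnorm_cong: "(\<And>i j. i < m \<Longrightarrow> j < k \<Longrightarrow> A i j = B i j) \<Longrightarrow> mat_opnorm m k A = mat_opnorm m k B"
  unfolding mat_opnorm_def vnorm_def by (intro arg_cong[where f=Sup] image_cong refl) auto

lemma Sabs_cont: "continuous_on UNIV (\<lambda>B::nat\<Rightarrow>nat\<Rightarrow>real. Sabs m k (\<lambda>i j. B i j - A i j))"
proof -
  have c: "continuous_on UNIV (\<lambda>B::nat\<Rightarrow>nat\<Rightarrow>real. B i j)" for i j
  proof -
    have "continuous_on UNIV (\<lambda>B::nat\<Rightarrow>nat\<Rightarrow>real. B i)" by simp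
    moreover have "continuous_on UNIV (\<lambda>f::nat\<Rightarrow>real. f j)" by simp
    ultimately show ?thesis using continuous_on_compose2[of UNIV "\<lambda>f::nat\<Rightarrow>real. f j" UNIV "\<lambda>B::nat\<Rightarrow>nat\<Rightarrow>real. B i"]
      by auto
  qed
  show ?thesis unfolding Sabs_def by (intro continuous_intros c)
qed

lemma opnorm_cont: "continuous_on UNIV (mat_opnorm m k)"
proof -
  have "isCont (mat_opnorm m k) A" for A
  proof -
    have t: "((\<lambda>B. Sabs m k (\<lambda>i j. B i j - A i j)) \<longlongrightarrow> 0) (at A)"
    proof -
      have "isCont (\<lambda>B. Sabs m k (\<lambda>i j. B i j - A i j)) A"
        using Sabs_cont[of m k A] by (simp add: continuous_on_eq_continuous_at)
      then have "((\<lambda>B. Sabs m k (\<lambda>i j. B i j - A i j)) \<longlongrightarrow> Sabs m k (\<lambda>i j. A i j - A i j)) (at A)"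
        unfolding isCont_def .
      then show ?thesis by (simp add: Sabs_def)
    qed
    have "((\<lambda>B. mat_opnorm m k B - mat_opnorm m k A) \<longlongrightarrow> 0) (at A)"
    proof (rule Lim_null_comparison[OF _ t])
      show "\<forall>\<^sub>F B in at A. norm (mat_opnorm m k B - mat_opnorm m k A) \<le> Sabs m k (\<lambda>i j. B i j - A i j)"
      proof (intro always_eventually allI)
        fix B
        have "Sabs m k (\<lambda>i j. A i j - B i j) = Sabs m k (\<lambda>i j. B i j - A i j)"
          unfolding Sabs_def by (simp add: abs_minus_commute)
        then show "norm (mat_opnorm m k B - mat_opnorm m k A) \<le> Sabs m k (\<lambda>i j. B i j - A i j)"
          using opnorm_lip[of m k A B] opnorm_lip[of m k B A] by auto
      qed
    qed
    then show ?thesis unfolding isCont_def by (simp add: LIM_zero_iff)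
  qed
  then show ?thesis by (simp add: continuous_at_imp_continuous_on)
qed

lemma opnorm_meas:
  assumes "\<And>i j. i < m \<Longrightarrow> j < k \<Longrightarrow> (\<lambda>\<omega>. A \<omega> i j) \<in> borel_measurable N"
  shows "(\<lambda>\<omega>. mat_opnorm m k (A \<omega>)) \<in> borel_measurable N"
proof -
  define T where "T \<omega> = (\<lambda>i j. if i < m \<and> j < k then A \<omega> i j else 0)" for \<omega>
  have Tm: "T \<in> borel_measurable N"
  proof (rule measurable_coordinatewise_then_product)
    fix i
    show "(\<lambda>\<omega>. T \<omega> i) \<in> borel_measurable N"
    proof (rule measurable_coordinatewise_then_product)
      fix j show "(\<lambda>\<omega>. T \<omega> i j) \<in> borel_measurable N"
        unfolding T_def using assms by (cases "i < m \<and> j < k") auto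
    qed
  qed
  have "(\<lambda>\<omega>. mat_opnorm m k (T \<omega>)) \<in> borel_measurable N"
    by (rule borel_measurable_continuous_on[OF opnorm_cont Tm])
  moreover have "mat_opnorm m k (T \<omega>) = mat_opnorm m k (A \<omega>)" for \<omega>
    by (rule opnorm_cong) (simp add: T_def)
  ultimately show ?thesis by simp
qed




lemma abs_le_1_sq: "\<bar>y::real\<bar> \<le> 1 + y^2"
proof -
  have "0 \<le> (\<bar>y\<bar> - 1)^2" by simp
  also have "(\<bar>y\<bar> - 1)^2 = y^2 - 2 * \<bar>y\<bar> + 1"
    by (simp add: power2_diff)
  finally have "2 * \<bar>y\<bar> \<le> y^2 + 1" by linarith
  moreover have "0 \<le> y^2" by simp
  ultimately show ?thesis by linarith
qed

lemma normal_facts: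
  assumes P: "prob_space N" and D: "distributed N lborel Y (normal_density 0 (sqrt s))" and s_pos: "s > 0"
  shows "Y \<in> borel_measurable N" "integrable N (\<lambda>\<omega>. \<bar>Y \<omega>\<bar>)" "(\<integral>\<omega>. \<bar>Y \<omega>\<bar> \<partial>N) \<le> 1 + s"
    "\<And>a. a > 0 \<Longrightarrow> measure N {\<omega>\<in>space N. a \<le> \<bar>Y \<omega>\<bar>} \<le> s / a\<^sup>2"
proof -
  interpret prob_space N by (rule P)
  have sq: "0 < sqrt s" using s_pos by simp
  show Ym: "Y \<in> borel_measurable N"
    using distributed_measurable[OF D] by simp
  have "integrable lborel (\<lambda>x. normal_density 0 (sqrt s) x * (x - 0)^2)"
    by (rule integrable_normal_moment[OF sq])
  then have i2: "integrable N (\<lambda>\<omega>. (Y \<omega>)^2)"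
    using distributed_integrable[OF D, of "\<lambda>x. x^2"] by (simp del: normal_density_def)
  have ex: "expectation Y = 0"
    by (rule normal_distributed_expectation[OF sq D])
  have var: "variance Y = s"
  proof -
    have "variance Y = (sqrt s)\<^sup>2" by (rule normal_distributed_variance[OF sq D])
    also have "(sqrt s)\<^sup>2 = s" using s_pos by simp
    finally show ?thesis .
  qed
  have e2: "expectation (\<lambda>\<omega>. (Y \<omega>)^2) = s"
  proof -
    have "(\<lambda>\<omega>. (Y \<omega>)^2) = (\<lambda>\<omega>. (Y \<omega> - expectation Y)^2)" unfolding ex by simp
    then show ?thesis using var by simp
  qed
  have i1: "integrable N Y" using Ym i2 by (rule square_integrable_imp_integrable)
  show ia: "integrable N (\<lambda>\<omega>. \<bar>Y \<omega>\<bar>)" using i1 by (rule integrable_abs)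
  have "(\<integral>\<omega>. \<bar>Y \<omega>\<bar> \<partial>N) \<le> (\<integral>\<omega>. 1 + (Y \<omega>)^2 \<partial>N)"
  proof (rule integral_mono[OF ia])
    show "integrable N (\<lambda>\<omega>. 1 + (Y \<omega>)^2)" using i2 by simp
    fix \<omega> show "\<bar>Y \<omega>\<bar> \<le> 1 + (Y \<omega>)^2"
      by (rule abs_le_1_sq)
  qed
  also have "\<dots> = 1 + s"
  proof -
    have "(\<integral>\<omega>. 1 + (Y \<omega>)^2 \<partial>N) = (\<integral>\<omega>. 1 \<partial>N) + (\<integral>\<omega>. (Y \<omega>)^2 \<partial>N)"
      by (rule Bochner_Integration.integral_add[OF _ i2]) simp
    then show ?thesis using e2 prob_space by simp
  qed
  finally show "(\<integral>\<omega>. \<bar>Y \<omega>\<bar> \<partial>N) \<le> 1 + s" .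
  fix a :: real assume a: "a > 0"
  have "prob {\<omega>\<in>space N. \<bar>Y \<omega> - expectation Y\<bar> \<ge> a} \<le> variance Y / a\<^sup>2"
    using a by (intro Chebyshev_inequality[OF Ym i2])
  then show "measure N {\<omega>\<in>space N. a \<le> \<bar>Y \<omega>\<bar>} \<le> s / a\<^sup>2" using e2 unfolding ex by simp
qed
lemma zt_bound:
  assumes "a < Suc p"
  shows "\<bar>Ztilde (Zmat e Xn Gam Ev) i a\<bar> \<le> 1 + (\<Sum>k<e. \<Sum>l<p. \<bar>Gam k l\<bar>) * (\<Sum>k<e. \<bar>Xn i k\<bar>) + (\<Sum>l<p. \<bar>Ev i l\<bar>)"
proof (cases "a = 0")
  case True
  have "0 \<le> (\<Sum>k<e. \<Sum>l<p. \<bar>Gam k l\<bar>) * (\<Sum>k<e. \<bar>Xn i k\<bar>)"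
    by (intro mult_nonneg_nonneg sum_nonneg) auto
  moreover have "0 \<le> (\<Sum>l<p. \<bar>Ev i l\<bar>)" by (intro sum_nonneg) auto
  moreover have "Ztilde (Zmat e Xn Gam Ev) i a = 1" using True by (simp add: Ztilde_def)
  ultimately show ?thesis by linarith
next
  case False
  define l where "l = a - 1"
  have l: "l < p" using False assms l_def by simp
  have za: "Ztilde (Zmat e Xn Gam Ev) i a = (\<Sum>k<e. Xn i k * Gam k l) + Ev i l"
    using False unfolding Ztilde_def Zmat_def l_def by simp
  have g: "\<bar>Gam k l\<bar> \<le> (\<Sum>k<e. \<Sum>l<p. \<bar>Gam k l\<bar>)" if "k < e" for k
  proof -
    have "\<bar>Gam k l\<bar> \<le> (\<Sum>l<p. \<bar>Gam k l\<bar>)" using l by (intro member_le_sum) auto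
    also have "\<dots> \<le> (\<Sum>k<e. \<Sum>l<p. \<bar>Gam k l\<bar>)"
      using that by (intro member_le_sum[where f="\<lambda>k. \<Sum>l<p. \<bar>Gam k l\<bar>"]) (auto intro: sum_nonneg)
    finally show ?thesis .
  qed
  have "\<bar>\<Sum>k<e. Xn i k * Gam k l\<bar> \<le> (\<Sum>k<e. \<bar>Xn i k * Gam k l\<bar>)"
    by (rule sum_abs)
  also have "\<dots> = (\<Sum>k<e. \<bar>Xn i k\<bar> * \<bar>Gam k l\<bar>)"
    by (simp add: abs_mult)
  also have "\<dots> \<le> (\<Sum>k<e. \<bar>Xn i k\<bar> * (\<Sum>k<e. \<Sum>l<p. \<bar>Gam k l\<bar>))"
    using g by (intro sum_mono mult_left_mono) auto
  also have "\<dots> = (\<Sum>k<e. \<Sum>l<p. \<bar>Gam k l\<bar>) * (\<Sum>k<e. \<bar>Xn i k\<bar>)"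
    by (simp add: sum_distrib_right mult.commute)
  finally have 1: "\<bar>\<Sum>k<e. Xn i k * Gam k l\<bar> \<le> (\<Sum>k<e. \<Sum>l<p. \<bar>Gam k l\<bar>) * (\<Sum>k<e. \<bar>Xn i k\<bar>)" .
  have 2: "\<bar>Ev i l\<bar> \<le> (\<Sum>l<p. \<bar>Ev i l\<bar>)" using l by (intro member_le_sum) auto
  have "\<bar>(\<Sum>k<e. Xn i k * Gam k l) + Ev i l\<bar> \<le> \<bar>\<Sum>k<e. Xn i k * Gam k l\<bar> + \<bar>Ev i l\<bar>"
    by (rule abs_triangle_ineq)
  then show ?thesis unfolding za using 1 2 by linarith
qed

lemma Sabs_cross:
  assumes "finite R"
  shows "Sabs (Suc p) e (crossprod R (Ztilde (Zmat e Xn Gam Ev)) Xn)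
    \<le> real (Suc p) * (\<Sum>i\<in>R. (1 + (\<Sum>k<e. \<Sum>l<p. \<bar>Gam k l\<bar>) * (\<Sum>k<e. \<bar>Xn i k\<bar>) + (\<Sum>l<p. \<bar>Ev i l\<bar>)) * (\<Sum>k<e. \<bar>Xn i k\<bar>))"
proof -
  define Z where "Z = Ztilde (Zmat e Xn Gam Ev)"
  define W where "W i = 1 + (\<Sum>k<e. \<Sum>l<p. \<bar>Gam k l\<bar>) * (\<Sum>k<e. \<bar>Xn i k\<bar>) + (\<Sum>l<p. \<bar>Ev i l\<bar>)" for i
  have ZW: "\<bar>Z i a\<bar> \<le> W i" if "a < Suc p" for i a
    unfolding Z_def W_def using that by (rule zt_bound)
  have "Sabs (Suc p) e (crossprod R Z Xn) = (\<Sum>a<Suc p. \<Sum>b<e. \<bar>\<Sum>i\<in>R. Z i a * Xn i b\<bar>)"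
    unfolding Sabs_def crossprod_def by simp
  also have "\<dots> \<le> (\<Sum>a<Suc p. \<Sum>b<e. \<Sum>i\<in>R. \<bar>Z i a * Xn i b\<bar>)"
    by (intro sum_mono sum_abs)
  also have "\<dots> = (\<Sum>a<Suc p. \<Sum>i\<in>R. \<Sum>b<e. \<bar>Z i a * Xn i b\<bar>)"
    by (intro sum.cong refl sum.swap)
  also have "\<dots> = (\<Sum>i\<in>R. \<Sum>a<Suc p. \<Sum>b<e. \<bar>Z i a * Xn i b\<bar>)"
    by (rule sum.swap)
  also have "\<dots> = (\<Sum>i\<in>R. \<Sum>a<Suc p. \<bar>Z i a\<bar> * (\<Sum>b<e. \<bar>Xn i b\<bar>))"
    by (simp only: abs_mult sum_distrib_left)
  also have "\<dots> \<le> (\<Sum>i\<in>R. \<Sum>a<Suc p. W i * (\<Sum>b<e. \<bar>Xn i b\<bar>))"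
  proof (intro sum_mono mult_right_mono)
    fix i a assume "a \<in> {..<Suc p}"
    then show "\<bar>Z i a\<bar> \<le> W i" using ZW by simp
  next
    fix i show "0 \<le> (\<Sum>b<e. \<bar>Xn i b\<bar>)" by (intro sum_nonneg) auto
  qed
  also have "\<dots> = real (Suc p) * (\<Sum>i\<in>R. W i * (\<Sum>k<e. \<bar>Xn i k\<bar>))"
    by (simp add: sum_distrib_left)
  finally show ?thesis unfolding Z_def W_def .
qed

lemma Zt_meas:
  assumes "\<And>i l. i < n \<Longrightarrow> l < p \<Longrightarrow> (\<lambda>\<omega>. Ev \<omega> i l) \<in> borel_measurable N" "i < n" "a < Suc p"
  shows "(\<lambda>\<omega>. Ztilde (Zmat e Xn Gam (Ev \<omega>)) i a) \<in> borel_measurable N"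
proof (cases "a = 0")
  case True then show ?thesis by (simp add: Ztilde_def)
next
  case False
  then have "a - 1 < p" using assms(3) by simp
  then show ?thesis using False assms by (simp add: Ztilde_def Zmat_def)
qed

lemma cross_meas:
  assumes "\<And>i l. i < n \<Longrightarrow> l < p \<Longrightarrow> (\<lambda>\<omega>. Ev \<omega> i l) \<in> borel_measurable N" "R \<subseteq> {..<n}" "a < Suc p"
  shows "(\<lambda>\<omega>. crossprod R (Ztilde (Zmat e Xn Gam (Ev \<omega>))) Xn a b) \<in> borel_measurable N"
  unfolding crossprod_def
  using assms Zt_meas[OF assms(1)] by (intro borel_measurable_sum borel_measurable_times) auto



lemma sum_abs_sq: "(\<Sum>k<e. \<bar>x k\<bar>)^2 \<le> real e * (\<Sum>k<e. (x k)^2)"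
proof -
  have "(\<Sum>k<e. \<bar>x k\<bar> * \<bar>1::real\<bar>) \<le> L2_set x {..<e} * L2_set (\<lambda>_. 1) {..<e}"
    by (rule L2_set_mult_ineq)
  also have "L2_set (\<lambda>_. 1::real) {..<e} = sqrt (real e)" by (simp add: L2_set_constant)
  finally have 1: "(\<Sum>k<e. \<bar>x k\<bar>) \<le> L2_set x {..<e} * sqrt (real e)" by simp
  have "(\<Sum>k<e. \<bar>x k\<bar>)^2 \<le> (L2_set x {..<e} * sqrt (real e))^2"
    using 1 by (intro power_mono) (auto intro: sum_nonneg)
  also have "\<dots> = (\<Sum>k<e. (x k)^2) * real e"
    by (simp add: power_mult_distrib L2_set_def sum_nonneg)
  finally show ?thesis by (simp add: mult.commute)
qed

lemma Q_bound:
  fixes X :: "nat \<Rightarrow> nat \<Rightarrow> nat \<Rightarrow> real" and Sigma :: "nat \<Rightarrow> nat \<Rightarrow> real"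
  assumes XtX_lim: "\<And>a b. a < e \<Longrightarrow> b < e \<Longrightarrow>
       (\<lambda>n. (\<Sum>i<n. X n i a * X n i b) / real n) \<longlonglongrightarrow> Sigma a b"
  shows "\<exists>C>0. \<forall>n. (\<Sum>i<n. \<Sum>k<e. (X n i k)^2) \<le> C * real n"
proof -
  have "(\<lambda>n. \<Sum>k<e. (\<Sum>i<n. X n i k * X n i k) / real n) \<longlonglongrightarrow> (\<Sum>k<e. Sigma k k)"
    using XtX_lim by (intro tendsto_sum) auto
  then have "Bseq (\<lambda>n. \<Sum>k<e. (\<Sum>i<n. X n i k * X n i k) / real n)"
    using convergent_imp_Bseq convergentI by blast
  then obtain C where C: "C > 0" "\<And>n. norm (\<Sum>k<e. (\<Sum>i<n. X n i k * X n i k) / real n) \<le> C"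
    by (auto elim: BseqE)
  show ?thesis
  proof (intro exI[of _ C] conjI allI C)
    fix n
    show "(\<Sum>i<n. \<Sum>k<e. (X n i k)^2) \<le> C * real n"
    proof (cases "n = 0")
      case True then show ?thesis by simp
    next
      case False
      have "(\<Sum>i<n. \<Sum>k<e. (X n i k)^2) = real n * (\<Sum>k<e. (\<Sum>i<n. X n i k * X n i k) / real n)"
        using False by (simp add: sum.swap[of _ "{..<n}"] sum_divide_distrib[symmetric] power2_eq_square)
      also have "\<dots> \<le> real n * C"
        using C(2)[of n] by (intro mult_left_mono) auto
      finally show ?thesis by (simp add: mult.commute)
    qed
  qed
qed


lemma part1:
  fixes M :: "nat \<Rightarrow> 'w measure"
    and X :: "nat \<Rightarrow> nat \<Rightarrow> nat \<Rightarrow> real"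
    and Gam :: "nat \<Rightarrow> nat \<Rightarrow> real"
    and E :: "nat \<Rightarrow> 'w \<Rightarrow> nat \<Rightarrow> nat \<Rightarrow> real"
    and e p :: nat and sigz2 :: real and Cq :: real
  assumes prob: "\<And>n. prob_space (M n)"
    and sigz2: "sigz2 > 0"
    and distE: "\<And>n i l. i < n \<Longrightarrow> l < p \<Longrightarrow>
       distributed (M n) lborel (\<lambda>\<omega>. E n \<omega> i l) (normal_density 0 (sqrt sigz2))"
    and Cq: "Cq > 0" "\<And>n. (\<Sum>i<n. \<Sum>k<e. (X n i k)^2) \<le> Cq * real n"
  shows "(\<forall>\<delta>>0. \<exists>K N. \<forall>n\<ge>N.
            measure (M n) {\<omega> \<in> space (M n).
               mat_opnorm (Suc p) e (crossprod {..<n} (Ztilde (Zmat e (X n) Gam (E n \<omega>))) (X n))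
                 \<le> K * real n} \<ge> 1 - \<delta>)"
proof (intro allI impI)
  fix \<delta> :: real assume \<delta>: "\<delta> > 0"
  define Gs where "Gs = (\<Sum>k<e. \<Sum>l<p. \<bar>Gam k l\<bar>)"
  have Gs0: "Gs \<ge> 0" unfolding Gs_def by (intro sum_nonneg) auto
  define c1 where "c1 = real p * (1 + sigz2) * (1 + real e * Cq) + 1"
  have c1: "c1 > 0" unfolding c1_def using sigz2 Cq by (intro add_nonneg_pos mult_nonneg_nonneg) auto
  define K where "K = real (Suc p) * ((1 + real e * Cq) + Gs * real e * Cq + c1 / \<delta>)"
  show "\<exists>K N. \<forall>n\<ge>N. measure (M n) {\<omega> \<in> space (M n).
               mat_opnorm (Suc p) e (crossprod {..<n} (Ztilde (Zmat e (X n) Gam (E n \<omega>))) (X n))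
                 \<le> K * real n} \<ge> 1 - \<delta>"
  proof (intro exI[of _ K] exI[of _ 1] allI impI)
    fix n :: nat assume n: "1 \<le> n"
    interpret P: prob_space "M n" by (rule prob)
    define Ab where "Ab i = (\<Sum>k<e. \<bar>X n i k\<bar>)" for i
    have Ab0: "Ab i \<ge> 0" for i unfolding Ab_def by (intro sum_nonneg) auto
    have Ab2: "(Ab i)^2 \<le> real e * (\<Sum>k<e. (X n i k)^2)" for i
      unfolding Ab_def by (rule sum_abs_sq)
    have Ab1: "Ab i \<le> 1 + real e * (\<Sum>k<e. (X n i k)^2)" for i
      using abs_le_1_sq[of "Ab i"] Ab2[of i] Ab0[of i] by simp
    have sumAb2: "(\<Sum>i<n. (Ab i)^2) \<le> real e * Cq * real n"
    proof -
      have "(\<Sum>i<n. (Ab i)^2) \<le> (\<Sum>i<n. real e * (\<Sum>k<e. (X n i k)^2))"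
        by (intro sum_mono Ab2)
      also have "\<dots> = real e * (\<Sum>i<n. \<Sum>k<e. (X n i k)^2)" by (simp add: sum_distrib_left)
      also have "\<dots> \<le> real e * (Cq * real n)" by (intro mult_left_mono Cq(2)) auto
      finally show ?thesis by simp
    qed
    have sumAb: "(\<Sum>i<n. Ab i) \<le> (1 + real e * Cq) * real n"
    proof -
      have "(\<Sum>i<n. Ab i) \<le> (\<Sum>i<n. 1 + real e * (\<Sum>k<e. (X n i k)^2))"
        by (intro sum_mono Ab1)
      also have "\<dots> = real n + real e * (\<Sum>i<n. \<Sum>k<e. (X n i k)^2)"
        by (simp add: sum.distrib sum_distrib_left)
      also have "\<dots> \<le> real n + real e * (Cq * real n)" by (intro add_left_mono mult_left_mono Cq(2)) auto
      finally show ?thesis by (simp add: algebra_simps)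
    qed
    have Em: "(\<lambda>\<omega>. E n \<omega> i l) \<in> borel_measurable (M n)" if "i < n" "l < p" for i l
      by (rule normal_facts(1)[OF prob distE[OF that] sigz2])
    have Ei: "integrable (M n) (\<lambda>\<omega>. \<bar>E n \<omega> i l\<bar>)" if "i < n" "l < p" for i l
      by (rule normal_facts(2)[OF prob distE[OF that] sigz2])
    have Eint: "(\<integral>\<omega>. \<bar>E n \<omega> i l\<bar> \<partial>M n) \<le> 1 + sigz2" if "i < n" "l < p" for i l
      by (rule normal_facts(3)[OF prob distE[OF that] sigz2])
    define R where "R \<omega> = (\<Sum>i<n. Ab i * (\<Sum>l<p. \<bar>E n \<omega> i l\<bar>))" for \<omega>
    have Rint: "integrable (M n) R"
      unfolding R_def using Ei by (intro Bochner_Integration.integrable_sum integrable_mult_right) auto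
    have R0: "R \<omega> \<ge> 0" for \<omega> unfolding R_def using Ab0 by (intro sum_nonneg mult_nonneg_nonneg) auto
    have intR: "(\<integral>\<omega>. R \<omega> \<partial>M n) \<le> c1 * real n"
    proof -
      have "(\<integral>\<omega>. R \<omega> \<partial>M n) = (\<Sum>i<n. Ab i * (\<Sum>l<p. (\<integral>\<omega>. \<bar>E n \<omega> i l\<bar> \<partial>M n)))"
      proof -
        have "(\<integral>\<omega>. R \<omega> \<partial>M n) = (\<Sum>i<n. (\<integral>\<omega>. Ab i * (\<Sum>l<p. \<bar>E n \<omega> i l\<bar>) \<partial>M n))"
          unfolding R_def using Ei
          by (intro Bochner_Integration.integral_sum integrable_mult_right Bochner_Integration.integrable_sum) auto
        also have "\<dots> = (\<Sum>i<n. Ab i * (\<integral>\<omega>. (\<Sum>l<p. \<bar>E n \<omega> i l\<bar>) \<partial>M n))"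
          by (simp only: integral_mult_right_zero)
        also have "\<dots> = (\<Sum>i<n. Ab i * (\<Sum>l<p. (\<integral>\<omega>. \<bar>E n \<omega> i l\<bar> \<partial>M n)))"
          using Ei by (intro sum.cong refl arg_cong2[where f="(*)"] Bochner_Integration.integral_sum) auto
        finally show ?thesis .
      qed
      also have "\<dots> \<le> (\<Sum>i<n. Ab i * (\<Sum>l<p. 1 + sigz2))"
        using Eint Ab0 by (intro sum_mono mult_left_mono) auto
      also have "\<dots> = real p * (1 + sigz2) * (\<Sum>i<n. Ab i)"
        by (simp add: sum_distrib_left sum_distrib_right mult_ac)
      also have "\<dots> \<le> real p * (1 + sigz2) * ((1 + real e * Cq) * real n)"
        using sumAb sigz2 by (intro mult_left_mono) auto
      also have "\<dots> \<le> c1 * real n" unfolding c1_def by (simp add: algebra_simps)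
      finally show ?thesis .
    qed
    define t where "t = c1 * real n / \<delta>"
    have t: "t > 0" unfolding t_def using c1 n \<delta> by simp
    have Rm: "R \<in> borel_measurable (M n)" using Rint by (rule borel_measurable_integrable)
    have bad: "measure (M n) {\<omega>\<in>space (M n). R \<omega> \<ge> t} \<le> \<delta>"
    proof -
      have "measure (M n) {\<omega>\<in>space (M n). R \<omega> \<ge> t} \<le> (\<integral>\<omega>. R \<omega> \<partial>M n) / t"
        using Rint t R0 by (intro integral_Markov_inequality_measure[where A="space (M n)"]) auto
      also have "\<dots> \<le> c1 * real n / t" using intR t by (intro divide_right_mono) auto
      also have "\<dots> = \<delta>" unfolding t_def using c1 n \<delta> by simp
      finally show ?thesis .
    qed
    define F where "F = {\<omega> \<in> space (M n).
               mat_opnorm (Suc p) e (crossprod {..<n} (Ztilde (Zmat e (X n) Gam (E n \<omega>))) (X n))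
                 \<le> K * real n}"
    have fm: "(\<lambda>\<omega>. mat_opnorm (Suc p) e (crossprod {..<n} (Ztilde (Zmat e (X n) Gam (E n \<omega>))) (X n)))
        \<in> borel_measurable (M n)"
      by (intro opnorm_meas cross_meas[OF Em]) auto
    have Fm: "F \<in> sets (M n)" unfolding F_def using fm by measurable
    have sub: "space (M n) - {\<omega>\<in>space (M n). R \<omega> \<ge> t} \<subseteq> F"
    proof
      fix \<omega> assume \<omega>: "\<omega> \<in> space (M n) - {\<omega>\<in>space (M n). R \<omega> \<ge> t}"
      then have Rt: "R \<omega> < t" by auto
      have "mat_opnorm (Suc p) e (crossprod {..<n} (Ztilde (Zmat e (X n) Gam (E n \<omega>))) (X n))
          \<le> Sabs (Suc p) e (crossprod {..<n} (Ztilde (Zmat e (X n) Gam (E n \<omega>))) (X n))"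
        by (rule opnorm_le_S)
      also have "\<dots> \<le> real (Suc p) * (\<Sum>i<n. (1 + Gs * Ab i + (\<Sum>l<p. \<bar>E n \<omega> i l\<bar>)) * Ab i)"
        unfolding Gs_def Ab_def by (rule Sabs_cross) simp
      also have "(\<Sum>i<n. (1 + Gs * Ab i + (\<Sum>l<p. \<bar>E n \<omega> i l\<bar>)) * Ab i)
          = (\<Sum>i<n. Ab i) + Gs * (\<Sum>i<n. (Ab i)^2) + R \<omega>"
        unfolding R_def by (simp add: algebra_simps sum.distrib sum_distrib_left power2_eq_square)
      also have "\<dots> \<le> (1 + real e * Cq) * real n + Gs * (real e * Cq * real n) + t"
        using sumAb sumAb2 Rt Gs0 by (intro add_mono mult_left_mono) auto
      also have "real (Suc p) * \<dots> = K * real n"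
        unfolding K_def t_def using \<delta> by (simp add: algebra_simps add_divide_distrib)
      finally show "\<omega> \<in> F" unfolding F_def using \<omega> by simp
    qed
    have "1 - \<delta> \<le> 1 - measure (M n) {\<omega>\<in>space (M n). R \<omega> \<ge> t}" using bad by simp
    also have "\<dots> = measure (M n) (space (M n) - {\<omega>\<in>space (M n). R \<omega> \<ge> t})"
      using Rm by (intro P.prob_compl[symmetric]) measurable
    also have "\<dots> \<le> measure (M n) F"
      using sub Fm by (intro P.finite_measure_mono)
    finally show "measure (M n) F \<ge> 1 - \<delta>" .
  qed
qed


lemma w_lim: "(\<lambda>n::nat. 1 / real n powr (1/3)) \<longlonglongrightarrow> 0"
  by real_asymp

lemma r3_cube: "real n > 0 \<Longrightarrow> (real n powr (1/3))^3 = real n"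
proof -
  assume "real n > 0"
  then have "(real n powr (1/3))^3 = real n powr (of_nat 3 * (1/3))"
    by (intro powr_power) simp
  also have "\<dots> = real n" using \<open>real n > 0\<close> by simp
  finally show ?thesis .
qed


lemma part2:
  fixes M :: "nat \<Rightarrow> 'w measure"
    and X :: "nat \<Rightarrow> nat \<Rightarrow> nat \<Rightarrow> real"
    and Gam :: "nat \<Rightarrow> nat \<Rightarrow> real"
    and E :: "nat \<Rightarrow> 'w \<Rightarrow> nat \<Rightarrow> nat \<Rightarrow> real"
    and e p :: nat and sigz2 :: real
  assumes prob: "\<And>n. prob_space (M n)"
    and sigz2: "sigz2 > 0"
    and distE: "\<And>n i l. i < n \<Longrightarrow> l < p \<Longrightarrow>
       distributed (M n) lborel (\<lambda>\<omega>. E n \<omega> i l) (normal_density 0 (sqrt sigz2))"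
    and maxrow: "(\<lambda>n. Max ((\<lambda>i. vnorm e (X n i)) ` {..<n}) / real n powr (1/3)) \<longlonglongrightarrow> 0"
  shows "(\<forall>\<eta>>0. (\<lambda>n. measure (M n) {\<omega> \<in> space (M n).
            Max ((\<lambda>r. mat_opnorm (Suc p) e
                   (\<lambda>a b. crossprod {..<n} (Ztilde (Zmat e (X n) Gam (E n \<omega>))) (X n) a b
                        - crossprod ({..<n} - {r}) (Ztilde (Zmat e (X n) Gam (E n \<omega>))) (X n) a b))
                 ` {..<n}) \<le> \<eta> * real n}) \<longlonglongrightarrow> 1)"
proof (intro allI impI)
  fix \<eta> :: real assume \<eta>: "\<eta> > 0"
  define F where "F n = {\<omega> \<in> space (M n).
            Max ((\<lambda>r. mat_opnorm (Suc p) e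
                   (\<lambda>a b. crossprod {..<n} (Ztilde (Zmat e (X n) Gam (E n \<omega>))) (X n) a b
                        - crossprod ({..<n} - {r}) (Ztilde (Zmat e (X n) Gam (E n \<omega>))) (X n) a b))
                 ` {..<n}) \<le> \<eta> * real n}" for n
  define Gs where "Gs = (\<Sum>k<e. \<Sum>l<p. \<bar>Gam k l\<bar>)"
  have Gs0: "Gs \<ge> 0" unfolding Gs_def by (intro sum_nonneg) auto
  define m where "m n = Max ((\<lambda>i. vnorm e (X n i)) ` {..<n})" for n
  define r3 where "r3 n = real n powr (1/3)" for n
  define w where "w n = 1 / r3 n" for n
  define u where "u n = m n / r3 n" for n
  have u: "u \<longlonglongrightarrow> 0" using maxrow unfolding u_def m_def r3_def .
  have w: "w \<longlonglongrightarrow> 0" using w_lim unfolding w_def r3_def .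
  define v where "v n = real (Suc p) * (real e * u n * (w n)^2 + Gs * (real e)^2 * (u n)^2 * w n + real e * real p * u n)" for n
  have "v \<longlonglongrightarrow> real (Suc p) * (real e * 0 * 0^2 + Gs * (real e)^2 * 0^2 * 0 + real e * real p * 0)"
    unfolding v_def by (intro tendsto_intros u w)
  then have v: "v \<longlonglongrightarrow> 0" by simp
  have ev: "eventually (\<lambda>n. v n < \<eta>) sequentially" using order_tendstoD(2)[OF v \<eta>] .
  define lb where "lb n = 1 - real p * sigz2 * w n" for n
  have "lb \<longlonglongrightarrow> 1 - real p * sigz2 * 0" unfolding lb_def by (intro tendsto_intros w)
  then have lb: "lb \<longlonglongrightarrow> 1" by simp
  have key: "lb n \<le> measure (M n) (F n)" if n1: "n \<ge> 1" and vn: "v n < \<eta>" for n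
  proof -
    interpret P: prob_space "M n" by (rule prob)
    have npos: "real n > 0" using n1 by simp
    have r3pos: "r3 n > 0" unfolding r3_def using npos by simp
    have n_eq: "real n = (r3 n)^3" unfolding r3_def using r3_cube[OF npos] by simp
    define \<tau> where "\<tau> = (r3 n)^2"
    have \<tau>: "\<tau> > 0" unfolding \<tau>_def using r3pos by simp
    have m0: "m n \<ge> 0"
    proof -
      have "vnorm e (X n 0) \<le> m n" unfolding m_def using n1 by (intro Max_ge) auto
      moreover have "vnorm e (X n 0) \<ge> 0" unfolding vnorm_def by (simp add: sum_nonneg)
      ultimately show ?thesis by linarith
    qed
    define Ab where "Ab i = (\<Sum>k<e. \<bar>X n i k\<bar>)" for i
    have Ab0: "Ab i \<ge> 0" for i unfolding Ab_def by (intro sum_nonneg) auto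
    have Abm: "Ab r \<le> real e * m n" if "r < n" for r
    proof -
      have "\<bar>X n r k\<bar> \<le> m n" if "k < e" for k
      proof -
        have "\<bar>X n r k\<bar> \<le> L2_set (\<lambda>k. \<bar>X n r k\<bar>) {..<e}"
          using that by (intro member_le_L2_set) auto
        also have "\<dots> = vnorm e (X n r)" unfolding vnorm_def L2_set_def by simp
        also have "\<dots> \<le> m n" unfolding m_def using \<open>r < n\<close> by (intro Max_ge) auto
        finally show ?thesis .
      qed
      then have "Ab r \<le> (\<Sum>k<e. m n)" unfolding Ab_def by (intro sum_mono) auto
      then show ?thesis by simp
    qed
    have Em: "(\<lambda>\<omega>. E n \<omega> i l) \<in> borel_measurable (M n)" if "i < n" "l < p" for i l
      by (rule normal_facts(1)[OF prob distE[OF that] sigz2])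
    have Ech: "measure (M n) {\<omega>\<in>space (M n). \<tau> \<le> \<bar>E n \<omega> i l\<bar>} \<le> sigz2 / \<tau>\<^sup>2" if "i < n" "l < p" for i l
      by (rule normal_facts(4)[OF prob distE[OF that] sigz2 \<tau>])
    define B where "B = (\<Union>il\<in>{..<n} \<times> {..<p}. {\<omega>\<in>space (M n). \<tau> \<le> \<bar>E n \<omega> (fst il) (snd il)\<bar>})"
    have Bsets: "(\<lambda>il. {\<omega>\<in>space (M n). \<tau> \<le> \<bar>E n \<omega> (fst il) (snd il)\<bar>}) ` ({..<n} \<times> {..<p}) \<subseteq> sets (M n)"
    proof (intro image_subsetI)
      fix il assume "il \<in> {..<n} \<times> {..<p}"
      then have [measurable]: "(\<lambda>\<omega>. E n \<omega> (fst il) (snd il)) \<in> borel_measurable (M n)" using Em by auto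
      show "{\<omega>\<in>space (M n). \<tau> \<le> \<bar>E n \<omega> (fst il) (snd il)\<bar>} \<in> sets (M n)" by measurable
    qed
    have Bm: "B \<in> sets (M n)" unfolding B_def using Bsets by blast
    have "measure (M n) B \<le> (\<Sum>il\<in>{..<n} \<times> {..<p}. measure (M n) {\<omega>\<in>space (M n). \<tau> \<le> \<bar>E n \<omega> (fst il) (snd il)\<bar>})"
      unfolding B_def using Bsets by (intro P.finite_measure_subadditive_finite) auto
    also have "\<dots> \<le> (\<Sum>il\<in>{..<n} \<times> {..<p}. sigz2 / \<tau>\<^sup>2)"
      using Ech by (intro sum_mono) auto
    also have "\<dots> = real n * real p * sigz2 / \<tau>\<^sup>2" by simp
    also have "\<dots> = real p * sigz2 * w n"
      unfolding w_def \<tau>_def n_eq using r3pos by (simp add: field_simps power2_eq_square power3_eq_cube)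
    finally have Bmeas: "measure (M n) B \<le> real p * sigz2 * w n" .
    have hm: "(\<lambda>\<omega>. mat_opnorm (Suc p) e
                   (\<lambda>a b. crossprod {..<n} (Ztilde (Zmat e (X n) Gam (E n \<omega>))) (X n) a b
                        - crossprod ({..<n} - {r}) (Ztilde (Zmat e (X n) Gam (E n \<omega>))) (X n) a b)) \<in> borel_measurable (M n)" for r
      by (intro opnorm_meas borel_measurable_diff cross_meas[OF Em]) auto
    have Feq: "F n = {\<omega> \<in> space (M n). \<forall>r\<in>{..<n}. mat_opnorm (Suc p) e
                   (\<lambda>a b. crossprod {..<n} (Ztilde (Zmat e (X n) Gam (E n \<omega>))) (X n) a b
                        - crossprod ({..<n} - {r}) (Ztilde (Zmat e (X n) Gam (E n \<omega>))) (X n) a b) \<le> \<eta> * real n}"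
      unfolding F_def using n1 by (subst Max_le_iff) (auto simp: lessThan_empty_iff)
    have Fm: "F n \<in> sets (M n)"
      unfolding Feq
    proof (intro sets.sets_Collect_finite_All)
      fix r show "{\<omega> \<in> space (M n). mat_opnorm (Suc p) e
                   (\<lambda>a b. crossprod {..<n} (Ztilde (Zmat e (X n) Gam (E n \<omega>))) (X n) a b
                        - crossprod ({..<n} - {r}) (Ztilde (Zmat e (X n) Gam (E n \<omega>))) (X n) a b) \<le> \<eta> * real n} \<in> sets (M n)"
        using hm[of r] by measurable
    qed simp
    have sub: "space (M n) - B \<subseteq> F n"
    proof
      fix \<omega> assume \<omega>: "\<omega> \<in> space (M n) - B"
      then have small: "\<bar>E n \<omega> i l\<bar> < \<tau>" if "i < n" "l < p" for i l
        using that unfolding B_def by force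
      have each: "mat_opnorm (Suc p) e
                   (\<lambda>a b. crossprod {..<n} (Ztilde (Zmat e (X n) Gam (E n \<omega>))) (X n) a b
                        - crossprod ({..<n} - {r}) (Ztilde (Zmat e (X n) Gam (E n \<omega>))) (X n) a b) \<le> \<eta> * real n"
        if r: "r < n" for r
      proof -
        have Deq: "(\<lambda>a b. crossprod {..<n} (Ztilde (Zmat e (X n) Gam (E n \<omega>))) (X n) a b
                        - crossprod ({..<n} - {r}) (Ztilde (Zmat e (X n) Gam (E n \<omega>))) (X n) a b)
              = crossprod {r} (Ztilde (Zmat e (X n) Gam (E n \<omega>))) (X n)"
          unfolding crossprod_def using r by (intro ext) (simp add: sum.remove[of "{..<n}" r])
        have sE: "(\<Sum>l<p. \<bar>E n \<omega> r l\<bar>) \<le> real p * \<tau>"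
        proof -
          have "(\<Sum>l<p. \<bar>E n \<omega> r l\<bar>) \<le> (\<Sum>l<p. \<tau>)" using small r by (intro sum_mono less_imp_le) auto
          then show ?thesis by simp
        qed
        have "mat_opnorm (Suc p) e (crossprod {r} (Ztilde (Zmat e (X n) Gam (E n \<omega>))) (X n))
            \<le> Sabs (Suc p) e (crossprod {r} (Ztilde (Zmat e (X n) Gam (E n \<omega>))) (X n))"
          by (rule opnorm_le_S)
        also have "\<dots> \<le> real (Suc p) * (\<Sum>i\<in>{r}. (1 + Gs * Ab i + (\<Sum>l<p. \<bar>E n \<omega> i l\<bar>)) * Ab i)"
          unfolding Gs_def Ab_def by (rule Sabs_cross) simp
        also have "\<dots> = real (Suc p) * ((1 + Gs * Ab r + (\<Sum>l<p. \<bar>E n \<omega> r l\<bar>)) * Ab r)" by simp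
        also have "\<dots> \<le> real (Suc p) * ((1 + Gs * (real e * m n) + real p * \<tau>) * (real e * m n))"
        proof -
          have g: "Gs * Ab r \<le> Gs * (real e * m n)" using Gs0 Abm[OF r] by (intro mult_left_mono)
          have W: "1 + Gs * Ab r + (\<Sum>l<p. \<bar>E n \<omega> r l\<bar>) \<le> 1 + Gs * (real e * m n) + real p * \<tau>"
            using g sE by linarith
          have W0: "0 \<le> 1 + Gs * Ab r + (\<Sum>l<p. \<bar>E n \<omega> r l\<bar>)"
            using Gs0 Ab0[of r] by (intro add_nonneg_nonneg mult_nonneg_nonneg sum_nonneg) auto
          have "(1 + Gs * Ab r + (\<Sum>l<p. \<bar>E n \<omega> r l\<bar>)) * Ab r \<le> (1 + Gs * (real e * m n) + real p * \<tau>) * (real e * m n)"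
            using W W0 Abm[OF r] Ab0[of r] by (intro mult_mono) auto
          then show ?thesis by (intro mult_left_mono) auto
        qed
        also have "\<dots> = v n * real n"
        proof -
          have m_eq: "m n = u n * r3 n" unfolding u_def using r3pos by simp
          show ?thesis unfolding v_def w_def \<tau>_def n_eq m_eq using r3pos
            by (simp add: field_simps power2_eq_square power3_eq_cube)
        qed
        also have "\<dots> \<le> \<eta> * real n" using vn npos by (intro mult_right_mono) auto
        finally show ?thesis unfolding Deq .
      qed
      show "\<omega> \<in> F n" unfolding Feq using \<omega> each by auto
    qed
    have "lb n \<le> 1 - measure (M n) B" unfolding lb_def using Bmeas by simp
    also have "\<dots> = measure (M n) (space (M n) - B)" using Bm by (intro P.prob_compl[symmetric])
    also have "\<dots> \<le> measure (M n) (F n)" using sub Fm by (intro P.finite_measure_mono)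
    finally show ?thesis .
  qed
  have ev1: "eventually (\<lambda>n. lb n \<le> measure (M n) (F n)) sequentially"
    using ev eventually_ge_at_top[of "1::nat"] by eventually_elim (use key in auto)
  have ev2: "eventually (\<lambda>n. measure (M n) (F n) \<le> 1) sequentially"
    using prob_space.prob_le_1[OF prob] by simp
  show "(\<lambda>n. measure (M n) (F n)) \<longlonglongrightarrow> 1"
    by (rule tendsto_sandwich[OF ev1 ev2 lb tendsto_const])
qed

theorem lemma4:
  fixes M :: "nat \<Rightarrow> 'w measure"
    and X :: "nat \<Rightarrow> nat \<Rightarrow> nat \<Rightarrow> real"
    and Gam :: "nat \<Rightarrow> nat \<Rightarrow> real"
    and E :: "nat \<Rightarrow> 'w \<Rightarrow> nat \<Rightarrow> nat \<Rightarrow> real"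
    and eps :: "nat \<Rightarrow> 'w \<Rightarrow> nat \<Rightarrow> real"
    and lam :: "nat \<Rightarrow> real"
    and beta0 :: "nat \<Rightarrow> nat \<Rightarrow> real"
    and e p :: nat
    and sig2 sigz2 kappa :: real
    and alpha0 Theta :: "nat \<Rightarrow> real"
    and Sigma :: "nat \<Rightarrow> nat \<Rightarrow> real"
  assumes prob: "\<And>n. prob_space (M n)"
    and sig2: "sig2 > 0" and sigz2: "sigz2 > 0"
    and distE: "\<And>n i l. i < n \<Longrightarrow> l < p \<Longrightarrow>
       distributed (M n) lborel (\<lambda>\<omega>. E n \<omega> i l) (normal_density 0 (sqrt sigz2))"
    and distEps: "\<And>n i. i < n \<Longrightarrow>
       distributed (M n) lborel (\<lambda>\<omega>. eps n \<omega> i) (normal_density 0 (sqrt sig2))"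
    and indep: "\<And>n. prob_space.indep_vars (M n) (\<lambda>_. borel)
       (\<lambda>k \<omega>. case k of Inl (i, l) \<Rightarrow> E n \<omega> i l | Inr i \<Rightarrow> eps n \<omega> i)
       (({..<n} \<times> {..<p}) <+> {..<n})"
    and lam_nonneg: "\<And>n. lam n \<ge> 0"
    and kappa: "kappa \<ge> 0" and lam_lim: "(\<lambda>n. lam n / real n) \<longlonglongrightarrow> kappa"
    and beta_lim: "\<And>k. k < e \<Longrightarrow> (\<lambda>n. sqrt (real n) * beta0 n k) \<longlonglongrightarrow> alpha0 k"
    and XtX_lim: "\<And>a b. a < e \<Longrightarrow> b < e \<Longrightarrow>
       (\<lambda>n. (\<Sum>i<n. X n i a * X n i b) / real n) \<longlonglongrightarrow> Sigma a b"
    and Sigma_pd: "posdef e Sigma"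
    and onesX_lim: "\<And>k. k < e \<Longrightarrow> (\<lambda>n. (\<Sum>i<n. X n i k) / real n) \<longlonglongrightarrow> Theta k"
    and maxrow: "(\<lambda>n. Max ((\<lambda>i. vnorm e (X n i)) ` {..<n}) / real n powr (1/3)) \<longlonglongrightarrow> 0"
  shows "(\<forall>\<delta>>0. \<exists>K N. \<forall>n\<ge>N.
            measure (M n) {\<omega> \<in> space (M n).
               mat_opnorm (Suc p) e (crossprod {..<n} (Ztilde (Zmat e (X n) Gam (E n \<omega>))) (X n))
                 \<le> K * real n} \<ge> 1 - \<delta>)
       \<and> (\<forall>\<eta>>0. (\<lambda>n. measure (M n) {\<omega> \<in> space (M n).
            Max ((\<lambda>r. mat_opnorm (Suc p) e
                   (\<lambda>a b. crossprod {..<n} (Ztilde (Zmat e (X n) Gam (E n \<omega>))) (X n) a b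
                        - crossprod ({..<n} - {r}) (Ztilde (Zmat e (X n) Gam (E n \<omega>))) (X n) a b))
                 ` {..<n}) \<le> \<eta> * real n}) \<longlonglongrightarrow> 1)"
proof -
  obtain Cq where Cq: "Cq > 0" "\<And>n. (\<Sum>i<n. \<Sum>k<e. (X n i k)^2) \<le> Cq * real n"
    using Q_bound[of e X Sigma, OF XtX_lim] by blast
  show ?thesis
  proof (rule conjI)
    show "\<forall>\<delta>>0. \<exists>K N. \<forall>n\<ge>N.
            measure (M n) {\<omega> \<in> space (M n).
               mat_opnorm (Suc p) e (crossprod {..<n} (Ztilde (Zmat e (X n) Gam (E n \<omega>))) (X n))
                 \<le> K * real n} \<ge> 1 - \<delta>"
      by (rule part1[OF prob sigz2 distE Cq])
    show "\<forall>\<eta>>0. (\<lambda>n. measure (M n) {\<omega> \<in> space (M n).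
            Max ((\<lambda>r. mat_opnorm (Suc p) e
                   (\<lambda>a b. crossprod {..<n} (Ztilde (Zmat e (X n) Gam (E n \<omega>))) (X n) a b
                        - crossprod ({..<n} - {r}) (Ztilde (Zmat e (X n) Gam (E n \<omega>))) (X n) a b))
                 ` {..<n}) \<le> \<eta> * real n}) \<longlonglongrightarrow> 1"
      by (rule part2[OF prob sigz2 distE maxrow])
  qed
qed

end
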